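(* Let $\mathcal{P}\subseteq\mathbb{Z}_{\geq0}$ with $0\in\mathcal{P}$, working with formal power series over a commutative ring $R\supseteq\mathbb{Q}$. Then $F^{\mathcal{P}}(z)=z\frac{\partial}{\partial z}\ln T^\mathcal{P}(z)$, i.e. $F^\mathcal{P}(z)=z\,\frac{\partial}{\partial z}T^\mathcal{P}(z)\big/T^\mathcal{P}(z)$, and for every $n\ge0$, $$[z^n]\,F^\mathcal{P}(z) = [z^n]\,e_\mathcal{P}(z)^n.$$
   Context: $[n]=\{1,\dots,n\}$; $[z^n]g$ is the coefficient of $z^n$. $e_\mathcal{P}(z)=\sum_{n\in\mathcal{P}}z^n/n!$. $T^\mathcal{P}(z)=\sum_t z^{|t|}/|t|!$ over labeled rooted trees $t$ (trees on vertex set $[|t|]$ with a distinguished root) in which every vertex has a number of children (neighbours farther from the root) in $\mathcal{P}$; since $0\in\mathcal{P}$, $T^\mathcal{P}(z)=z\cdot(\text{invertible series})$, so the quotient is a formal (Laurent) power series. $F^\mathcal{P}(z)=\sum_{n\ge0}c_nz^n/n!$ where $c_n$ is the number of functions $f:[n]\to[n]$ with $|f^{-1}(x)|\in\mathcal{P}$ for all $x\in[n]$ ($c_0=1$). *)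

theory Defs
  imports "HOL-Computational_Algebra.Formal_Power_Series" "HOL-Library.FuncSet"
begin

text \<open>A labeled rooted tree on vertex set [n] = {1..n} is encoded by its parent map:
  the root r is the unique fixed point, every other vertex x is sent to its parent p x,
  and iterating p from any vertex reaches the root (so there are no cycles).\<close>

definition rooted_tree :: "nat \<Rightarrow> (nat \<Rightarrow> nat) \<Rightarrow> bool" where
  "rooted_tree n p \<longleftrightarrow> p \<in> {1..n} \<rightarrow>\<^sub>E {1..n} \<and>
     (\<exists>r\<in>{1..n}. p r = r \<and> (\<forall>x\<in>{1..n}. \<exists>k. (p ^^ k) x = r))"

definition children :: "nat \<Rightarrow> (nat \<Rightarrow> nat) \<Rightarrow> nat \<Rightarrow> nat set" where
  "children n p x = {y \<in> {1..n}. y \<noteq> x \<and> p y = x}"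

definition P_trees :: "nat set \<Rightarrow> nat \<Rightarrow> (nat \<Rightarrow> nat) set" where
  "P_trees P n = {p. rooted_tree n p \<and> (\<forall>x\<in>{1..n}. card (children n p x) \<in> P)}"

definition T_P :: "nat set \<Rightarrow> 'a::field_char_0 fps" where
  "T_P P = Abs_fps (\<lambda>n. of_nat (card (P_trees P n)) / fact n)"

definition P_functions :: "nat set \<Rightarrow> nat \<Rightarrow> (nat \<Rightarrow> nat) set" where
  "P_functions P n = {f \<in> {1..n} \<rightarrow>\<^sub>E {1..n}. \<forall>x\<in>{1..n}. card (f -` {x} \<inter> {1..n}) \<in> P}"

definition F_P :: "nat set \<Rightarrow> 'a::field_char_0 fps" where
  "F_P P = Abs_fps (\<lambda>n. of_nat (card (P_functions P n)) / fact n)"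

definition e_P :: "nat set \<Rightarrow> 'a::field_char_0 fps" where
  "e_P P = Abs_fps (\<lambda>n. if n \<in> P then 1 / fact n else 0)"

end

theory Submission
  imports Defs
begin
unbundle fps_syntax


lemma psi_pow_nth_below:
  fixes \<phi> :: "'a::field fps"
  assumes "i < m"
  shows "((fps_X * inverse \<phi>) ^ m) $ i = 0"
  using assms by (simp add: power_mult_distrib fps_X_power_mult_nth)

lemma key_coeff:
  fixes \<phi> :: "'a::field_char_0 fps"
  assumes "\<phi> $ 0 = 1"
  shows "(\<phi> ^ (j+1) * fps_deriv (fps_X * inverse \<phi>)) $ j = (if j = 0 then 1 else 0)"
proof -
  have ne: "\<phi> $ 0 \<noteq> 0" using assms by simp
  have inv: "\<phi> * inverse \<phi> = 1" using ne by (simp add: inverse_mult_eq_1')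
  have d: "fps_deriv (fps_X * inverse \<phi>) = inverse \<phi> - fps_X * fps_deriv \<phi> * (inverse \<phi>)^2"
    using ne by (simp add: fps_inverse_deriv algebra_simps)
  show ?thesis
  proof (cases j)
    case 0
    have "\<phi> * fps_deriv (fps_X * inverse \<phi>) = 1 - fps_X * (fps_deriv \<phi> * inverse \<phi> * (\<phi> * inverse \<phi>))"
      unfolding d by (simp add: algebra_simps power2_eq_square inv)
    then show ?thesis using 0 by (simp add: inv)
  next
    case (Suc i)
    have "\<phi> ^ (j+1) * fps_deriv (fps_X * inverse \<phi>) =
        \<phi> ^ (i+1) * (\<phi> * inverse \<phi>) - fps_X * (fps_deriv \<phi> * \<phi> ^ i * (\<phi> * inverse \<phi>)^2)"
      unfolding d Suc by (simp add: algebra_simps power2_eq_square)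
    also have "\<dots> = \<phi> ^ (i+1) - fps_X * (fps_deriv \<phi> * \<phi> ^ i)" by (simp add: inv)
    finally have e: "\<phi> ^ (j+1) * fps_deriv (fps_X * inverse \<phi>) = \<phi> ^ (i+1) - fps_X * (fps_deriv \<phi> * \<phi> ^ i)" .
    have "(fps_deriv (\<phi> ^ (i+1))) $ i = of_nat (i+1) * (\<phi> ^ (i+1)) $ (i+1)"
      by (simp only: fps_deriv_nth)
    moreover have "fps_deriv (\<phi> ^ (i+1)) = fps_const (of_nat (i+1)) * (fps_deriv \<phi> * \<phi> ^ i)"
      by (subst fps_deriv_power) (simp add: mult.assoc)
    ultimately have "of_nat (i+1) * (fps_deriv \<phi> * \<phi> ^ i) $ i = of_nat (i+1) * (\<phi> ^ (i+1)) $ (i+1)"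
      by (metis fps_mult_left_const_nth)
    then have "(fps_deriv \<phi> * \<phi> ^ i) $ i = (\<phi> ^ (i+1)) $ (i+1)"
      by (metis mult_cancel_left of_nat_eq_0_iff add_eq_0_iff_both_eq_0 one_neq_zero)
    then show ?thesis using e Suc by (simp add: fps_X_mult_nth)
  qed
qed

lemma lagrange:
  fixes \<phi> :: "'a::field_char_0 fps"
  assumes \<phi>0: "\<phi> $ 0 = 1"
  defines "\<psi> \<equiv> fps_X * inverse \<phi>"
  assumes Tdef: "T = fps_inv \<psi>"
  shows "T = fps_X * (\<phi> oo T)" and "(fps_X * fps_deriv T / T) $ n = (\<phi> ^ n) $ n"
proof -
  have ne: "\<phi> $ 0 \<noteq> 0" using \<phi>0 by simp
  have inv: "inverse \<phi> * \<phi> = 1" using ne by (simp add: inverse_mult_eq_1)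
  have \<psi>0: "\<psi> $ 0 = 0" by (simp add: \<psi>_def)
  have \<psi>1: "\<psi> $ 1 = 1" using \<phi>0 by (simp add: \<psi>_def)
  have T0: "T $ 0 = 0" by (simp add: Tdef fps_inv_def)
  have r: "\<psi> oo T = fps_X" using fps_inv_right[of \<psi>] \<psi>0 \<psi>1 Tdef by simp
  have l: "T oo \<psi> = fps_X" using fps_inv[of \<psi>] \<psi>0 \<psi>1 Tdef by simp
  define G where "G = \<phi> oo T"
  have G0: "G $ 0 = 1" using \<phi>0 by (simp add: G_def)
  have "\<psi> oo T = (fps_X oo T) * (inverse \<phi> oo T)"
    unfolding \<psi>_def using T0 by (rule fps_compose_mult_distrib)
  also have "\<dots> = T * inverse G"
    using T0 ne by (simp add: G_def fps_inverse_compose)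
  finally have "T * inverse G = fps_X" using r by simp
  then have "T * inverse G * G = fps_X * G" by simp
  moreover have "inverse G * G = 1" using G0 by (simp add: inverse_mult_eq_1)
  ultimately have TG: "T = fps_X * G" by (simp add: mult.assoc)
  then show "T = fps_X * (\<phi> oo T)" by (simp add: G_def)
  define A where "A = fps_X * fps_deriv T / T"
  have "A = (fps_deriv T * fps_X) / (G * fps_X)" unfolding A_def TG
    by (simp add: mult.commute)
  also have "\<dots> = fps_deriv T / G" by (rule fps_divide_cancel) simp
  also have "\<dots> = fps_deriv T * inverse G" using G0 by (simp add: fps_divide_unit)
  finally have A: "A = fps_deriv T * inverse G" .
  have "fps_deriv (T oo \<psi>) = (fps_deriv T oo \<psi>) * fps_deriv \<psi>"
    using \<psi>0 by (rule fps_compose_deriv)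
  then have ch: "(fps_deriv T oo \<psi>) * fps_deriv \<psi> = 1" using l by simp
  have "G oo \<psi> = \<phi> oo (T oo \<psi>)" unfolding G_def using \<psi>0 T0
    by (simp add: fps_compose_assoc)
  then have G\<psi>: "G oo \<psi> = \<phi>" using l by simp
  have "A oo \<psi> = (fps_deriv T oo \<psi>) * (inverse G oo \<psi>)"
    unfolding A using \<psi>0 by (rule fps_compose_mult_distrib)
  also have "inverse G oo \<psi> = inverse \<phi>"
    using \<psi>0 G0 G\<psi> by (simp add: fps_inverse_compose)
  finally have "(A oo \<psi>) * fps_deriv \<psi> * \<phi> = (fps_deriv T oo \<psi>) * fps_deriv \<psi> * (inverse \<phi> * \<phi>)"
    by (simp add: algebra_simps)
  then have main: "(A oo \<psi>) * fps_deriv \<psi> * \<phi> = 1" using ch inv by simp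
  define Q where "Q = \<phi> ^ (n+1) * fps_deriv \<psi>"
  have "\<phi> ^ n = ((A oo \<psi>) * fps_deriv \<psi> * \<phi>) * \<phi> ^ n" using main by simp
  also have "\<dots> = (A oo \<psi>) * Q" by (simp add: Q_def algebra_simps)
  finally have e1: "(\<phi> ^ n) $ n = ((A oo \<psi>) * Q) $ n" by simp
  have ext: "(A oo \<psi>) $ i = (\<Sum>m=0..n. A $ m * (\<psi> ^ m) $ i)" if "i \<le> n" for i
  proof -
    have "(A oo \<psi>) $ i = (\<Sum>m=0..i. A $ m * (\<psi> ^ m) $ i)" by (rule fps_compose_nth)
    also have "\<dots> = (\<Sum>m=0..n. A $ m * (\<psi> ^ m) $ i)"
    proof (rule sum.mono_neutral_left)
      have z: "(\<psi> ^ m) $ i = 0" if "i < m" for m using that by (simp add: \<psi>_def psi_pow_nth_below)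
      show "\<forall>m\<in>{0..n} - {0..i}. A $ m * (\<psi> ^ m) $ i = 0" using z by auto
    qed (use that in simp_all)
    finally show ?thesis .
  qed
  have "((A oo \<psi>) * Q) $ n = (\<Sum>i=0..n. (\<Sum>m=0..n. A $ m * (\<psi> ^ m) $ i) * Q $ (n - i))"
    by (simp add: fps_mult_nth ext)
  also have "\<dots> = (\<Sum>m=0..n. A $ m * (\<Sum>i=0..n. (\<psi> ^ m) $ i * Q $ (n - i)))"
    unfolding sum_distrib_left sum_distrib_right
    by (subst sum.swap) (simp add: mult.assoc)
  also have "\<dots> = (\<Sum>m=0..n. A $ m * (\<psi> ^ m * Q) $ n)"
    by (simp add: fps_mult_nth)
  also have "\<dots> = (\<Sum>m=0..n. A $ m * (if m = n then 1 else 0))"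
  proof (rule sum.cong[OF refl])
    fix m assume "m \<in> {0..n}"
    then have mn: "m \<le> n" by simp
    have "(inverse \<phi>) ^ m * \<phi> ^ (n+1) = ((inverse \<phi>) ^ m * \<phi> ^ m) * \<phi> ^ ((n-m)+1)"
      using mn by (simp add: power_add[symmetric] mult.assoc)
    also have "\<dots> = \<phi> ^ ((n-m)+1)" by (simp add: power_mult_distrib[symmetric] inv)
    finally have f: "(inverse \<phi>) ^ m * \<phi> ^ (n+1) = \<phi> ^ ((n-m)+1)" .
    have "\<psi> ^ m * Q = fps_X ^ m * (((inverse \<phi>) ^ m * \<phi> ^ (n+1)) * fps_deriv \<psi>)"
      unfolding Q_def by (simp only: \<psi>_def power_mult_distrib ac_simps)
    then have "\<psi> ^ m * Q = fps_X ^ m * (\<phi> ^ ((n-m)+1) * fps_deriv \<psi>)"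
      by (simp only: f)
    then have "(\<psi> ^ m * Q) $ n = (\<phi> ^ ((n-m)+1) * fps_deriv \<psi>) $ (n-m)"
      using mn by (simp add: fps_X_power_mult_nth)
    also have "\<dots> = (if n - m = 0 then 1 else 0)"
      unfolding \<psi>_def by (rule key_coeff[OF \<phi>0])
    finally show "A $ m * (\<psi> ^ m * Q) $ n = A $ m * (if m = n then 1 else 0)"
      using mn by (cases "m = n") auto
  qed
  also have "\<dots> = (\<Sum>m=0..n. if m = n then A $ m else 0)" by (rule sum.cong) auto
  also have "\<dots> = A $ n" by simp
  finally show "(fps_X * fps_deriv T / T) $ n = (\<phi> ^ n) $ n" using e1 by (simp add: A_def)
qed



lemma sum_pow_card:
  fixes f :: "nat \<Rightarrow> 'a::comm_semiring_1"
  assumes "finite A"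
  shows "(\<Sum>S\<in>Pow A. f (card S)) = (\<Sum>j=0..card A. of_nat (card A choose j) * f j)"
proof -
  have "(\<Sum>S\<in>Pow A. f (card S)) = (\<Sum>j\<in>{0..card A}. \<Sum>S\<in>{S. S \<in> Pow A \<and> card S = j}. f (card S))"
    by (rule sum.group[symmetric]) (use assms in \<open>auto intro: card_mono\<close>)
  also have "\<dots> = (\<Sum>j\<in>{0..card A}. \<Sum>S\<in>{S. S \<subseteq> A \<and> card S = j}. f j)"
    by (rule sum.cong) auto
  also have "\<dots> = (\<Sum>j=0..card A. of_nat (card A choose j) * f j)"
    using n_subsets[OF assms] by simp
  finally show ?thesis .
qed

lemma card_group:
  assumes "finite X" "finite K" "key ` X \<subseteq> K"
  shows "card X = (\<Sum>k\<in>K. card {x\<in>X. key x = k})"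
proof -
  have "card X = (\<Sum>x\<in>X. 1)" by simp
  also have "\<dots> = (\<Sum>k\<in>K. \<Sum>x\<in>{x. x \<in> X \<and> key x = k}. 1)"
    by (rule sum.group[symmetric]) (use assms in auto)
  finally show ?thesis by simp
qed

definition fset :: "nat set \<Rightarrow> nat set \<Rightarrow> nat set \<Rightarrow> (nat \<Rightarrow> nat) set" where
  "fset P C R = {g \<in> C \<rightarrow>\<^sub>E R. \<forall>x\<in>R. card (g -` {x} \<inter> C) \<in> P}"

lemma finite_fset: "finite C \<Longrightarrow> finite R \<Longrightarrow> finite (fset P C R)"
  unfolding fset_def by (rule finite_subset[of _ "C \<rightarrow>\<^sub>E R"]) (auto intro: finite_PiE)

lemma fset_empty: "fset P C {} = (if C = {} then {\<lambda>_. undefined} else {})"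
  by (auto simp: fset_def)

lemma fset_insert_slice:
  assumes "b \<notin> R" "S \<subseteq> C" "card S \<in> P"
  shows "card {g \<in> fset P C (insert b R). g -` {b} \<inter> C = S} = card (fset P (C - S) R)"
proof -
  let ?A = "{g \<in> fset P C (insert b R). g -` {b} \<inter> C = S}"
  let ?f = "\<lambda>g. restrict g (C - S)"
  let ?f' = "\<lambda>h x. if x \<in> S then b else h x"
  have fib1: "?f g -` {x} \<inter> (C - S) = g -` {x} \<inter> C" if "g \<in> ?A" "x \<in> R" for g x
    using that assms by auto
  have fib2: "?f' h -` {x} \<inter> C = h -` {x} \<inter> (C - S)" if "h \<in> fset P (C - S) R" "x \<in> R" for h x
    using that assms by auto
  have "bij_betw ?f ?A (fset P (C - S) R)"
  proof (rule bij_betw_byWitness[where f'="?f'"])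
    show "\<forall>a\<in>?A. ?f' (?f a) = a"
    proof
      fix g assume g: "g \<in> ?A"
      show "?f' (?f g) = g"
      proof
        fix x show "?f' (?f g) x = g x"
          using g assms(2) by (auto simp: fset_def PiE_def extensional_def)
      qed
    qed
    show "\<forall>a'\<in>fset P (C - S) R. ?f (?f' a') = a'"
    proof
      fix h assume h: "h \<in> fset P (C - S) R"
      show "?f (?f' h) = h"
      proof
        fix x show "?f (?f' h) x = h x"
          using h by (auto simp: fset_def PiE_def extensional_def)
      qed
    qed
    show "?f ` ?A \<subseteq> fset P (C - S) R"
    proof
      fix h assume "h \<in> ?f ` ?A"
      then obtain g where g: "g \<in> ?A" and h: "h = ?f g" by blast
      have "g \<in> C \<rightarrow>\<^sub>E insert b R" using g by (simp add: fset_def)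
      then have "h \<in> (C - S) \<rightarrow>\<^sub>E R" using g unfolding h by (auto simp: PiE_def Pi_def)
      moreover have "\<forall>x\<in>R. card (h -` {x} \<inter> (C - S)) \<in> P"
        using fib1[OF g] g unfolding h by (auto simp: fset_def)
      ultimately show "h \<in> fset P (C - S) R" by (simp add: fset_def)
    qed
    show "?f' ` fset P (C - S) R \<subseteq> ?A"
    proof
      fix g assume "g \<in> ?f' ` fset P (C - S) R"
      then obtain h where h: "h \<in> fset P (C - S) R" and g: "g = ?f' h" by blast
      have hP: "h \<in> (C - S) \<rightarrow>\<^sub>E R" using h by (simp add: fset_def)
      have "g \<in> C \<rightarrow>\<^sub>E insert b R" using hP assms(2) unfolding g by (auto simp: PiE_def Pi_def extensional_def)
      moreover have "g -` {b} \<inter> C = S" using hP assms unfolding g by (auto simp: PiE_def Pi_def split: if_splits)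
      moreover have "\<forall>x\<in>R. card (g -` {x} \<inter> C) \<in> P"
        using fib2[OF h] h unfolding g by (auto simp: fset_def)
      ultimately show "g \<in> ?A" using assms(3) by (simp add: fset_def)
    qed
  qed
  then show ?thesis by (rule bij_betw_same_card)
qed

lemma fset_insert_slice0:
  assumes "card S \<notin> P"
  shows "{g \<in> fset P C (insert b R). g -` {b} \<inter> C = S} = {}"
  using assms by (auto simp: fset_def)

lemma fcount:
  assumes "finite R" "finite C"
  shows "(of_nat (card (fset P C R)) :: 'a::field_char_0) = fact (card C) * ((e_P P :: 'a fps) ^ card R) $ card C"
  using assms
proof (induction R arbitrary: C rule: finite_induct)
  case empty
  then show ?case by (simp add: fset_empty)
next
  case (insert b R)
  let ?\<phi> = "e_P P :: 'a fps"
  let ?c = "card C"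
  have fin: "finite (fset P C (insert b R))" using insert by (simp add: finite_fset)
  have "card (fset P C (insert b R)) =
      (\<Sum>S\<in>Pow C. card {g \<in> fset P C (insert b R). g -` {b} \<inter> C = S})"
    by (rule card_group) (use fin insert in auto)
  also have "\<dots> = (\<Sum>S\<in>Pow C. if card S \<in> P then card (fset P (C - S) R) else 0)"
    by (rule sum.cong) (use insert in \<open>auto simp: fset_insert_slice fset_insert_slice0\<close>)
  finally have cnt: "card (fset P C (insert b R)) = (\<Sum>S\<in>Pow C. if card S \<in> P then card (fset P (C - S) R) else 0)" .
  have "(of_nat (card (fset P C (insert b R))) :: 'a) =
      (\<Sum>S\<in>Pow C. if card S \<in> P then of_nat (card (fset P (C - S) R)) else 0)"
    unfolding cnt of_nat_sum by (intro sum.cong) auto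
  also have "\<dots> = (\<Sum>S\<in>Pow C. if card S \<in> P then fact (?c - card S) * (?\<phi> ^ card R) $ (?c - card S) else 0)"
    by (rule sum.cong) (use insert in \<open>auto simp: card_Diff_subset finite_subset\<close>)
  also have "\<dots> = (\<Sum>j=0..?c. of_nat (?c choose j) * (if j \<in> P then fact (?c - j) * (?\<phi> ^ card R) $ (?c - j) else 0))"
    by (rule sum_pow_card[where f = "\<lambda>j. if j \<in> P then fact (?c - j) * (?\<phi> ^ card R) $ (?c - j) else 0"]) (rule insert)
  also have "\<dots> = (\<Sum>j=0..?c. fact ?c * (?\<phi> $ j * (?\<phi> ^ card R) $ (?c - j)))"
  proof (rule sum.cong[OF refl])
    fix j assume "j \<in> {0..?c}"
    then have j: "j \<le> ?c" by simp
    have "(of_nat (?c choose j) :: 'a) * fact (?c - j) = fact ?c / fact j"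
    proof -
      have "(of_nat (fact j * fact (?c - j) * (?c choose j)) :: 'a) = of_nat (fact ?c)"
        using binomial_fact_lemma[OF j] by simp
      then have "fact j * fact (?c - j) * (of_nat (?c choose j) :: 'a) = fact ?c"
        by (simp only: of_nat_mult of_nat_fact)
      then show ?thesis by (simp add: field_simps)
    qed
    then show "of_nat (?c choose j) * (if j \<in> P then fact (?c - j) * (?\<phi> ^ card R) $ (?c - j) else 0) =
        fact ?c * (?\<phi> $ j * (?\<phi> ^ card R) $ (?c - j))"
      by (auto simp: e_P_def field_simps)
  qed
  also have "\<dots> = fact ?c * (?\<phi> * ?\<phi> ^ card R) $ ?c"
    by (simp add: fps_mult_nth sum_distrib_left)
  finally show ?case using insert by simp
qed



inductive reach :: "(nat \<Rightarrow> nat) \<Rightarrow> nat set \<Rightarrow> nat \<Rightarrow> bool" for p R where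
  base: "x \<in> R \<Longrightarrow> reach p R x"
| step: "reach p R (p x) \<Longrightarrow> reach p R x"

lemma reach_iff: "reach p R x \<longleftrightarrow> (\<exists>k. (p ^^ k) x \<in> R)"
proof
  assume "reach p R x" then show "\<exists>k. (p ^^ k) x \<in> R"
  proof induction
    case (base x) then show ?case by (metis funpow_0)
  next
    case (step x)
    then obtain k where "(p ^^ k) (p x) \<in> R" by blast
    then have "(p ^^ Suc k) x \<in> R" by (simp add: funpow_Suc_right del: funpow.simps)
    then show ?case by blast
  qed
next
  assume "\<exists>k. (p ^^ k) x \<in> R"
  then obtain k where "(p ^^ k) x \<in> R" by blast
  then show "reach p R x"
  proof (induction k arbitrary: x)
    case 0 then show ?case by (simp add: reach.base)
  next
    case (Suc k)
    then have "(p ^^ k) (p x) \<in> R" by (simp add: funpow_Suc_right del: funpow.simps)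
    then show ?case using Suc.IH by (blast intro: reach.step)
  qed
qed

lemma reach_fixed: "reach p R x \<Longrightarrow> p x = x \<Longrightarrow> x \<in> R"
  by (induction rule: reach.induct) auto

lemma reach_empty: "\<not> reach p {} x"
proof
  assume "reach p {} x" then show False by induction auto
qed

definition ch :: "nat set \<Rightarrow> (nat \<Rightarrow> nat) \<Rightarrow> nat \<Rightarrow> nat set" where
  "ch W p x = {y \<in> W. y \<noteq> x \<and> p y = x}"

definition good :: "nat set \<Rightarrow> nat set \<Rightarrow> nat set \<Rightarrow> (nat \<Rightarrow> nat) \<Rightarrow> bool" where
  "good P W R p \<longleftrightarrow> p \<in> W \<rightarrow>\<^sub>E W \<and> (\<forall>r\<in>R. p r = r) \<and> (\<forall>x\<in>W. reach p R x) \<and>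
     (\<forall>x\<in>W. card (ch W p x) \<in> P)"

definition hset :: "nat set \<Rightarrow> nat set \<Rightarrow> nat set \<Rightarrow> (nat \<Rightarrow> nat) set" where
  "hset P W R = {p. good P W R p}"

lemma finite_hset: "finite W \<Longrightarrow> finite (hset P W R)"
  unfolding hset_def good_def by (rule finite_subset[of _ "W \<rightarrow>\<^sub>E W"]) (auto intro: finite_PiE)

definition keyC :: "nat set \<Rightarrow> nat set \<Rightarrow> (nat \<Rightarrow> nat) \<Rightarrow> nat set" where
  "keyC W R p = {y \<in> W - R. p y \<in> R}"

definition lower :: "nat set \<Rightarrow> nat set \<Rightarrow> nat set \<Rightarrow> (nat \<Rightarrow> nat) \<Rightarrow> (nat \<Rightarrow> nat)" where
  "lower W R C p = (\<lambda>x. if x \<in> W - R then (if x \<in> C then x else p x) else undefined)"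

definition glue :: "nat set \<Rightarrow> nat set \<Rightarrow> (nat \<Rightarrow> nat) \<Rightarrow> (nat \<Rightarrow> nat) \<Rightarrow> (nat \<Rightarrow> nat)" where
  "glue R C g q = (\<lambda>x. if x \<in> R then x else if x \<in> C then g x else q x)"

lemma reach_lower:
  assumes "reach p R x" "x \<in> W - R" "p \<in> W \<rightarrow> W"
  shows "reach (lower W R (keyC W R p) p) (keyC W R p) x"
  using assms
proof (induction rule: reach.induct)
  case (base x) then show ?case by simp
next
  case (step x)
  show ?case
  proof (cases "p x \<in> R")
    case True
    then have "x \<in> keyC W R p" using step.prems by (simp add: keyC_def)
    then show ?thesis by (rule reach.base)
  next
    case False
    then have px: "p x \<in> W - R" using step.prems by auto
    have "x \<notin> keyC W R p" using False by (simp add: keyC_def)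
    then have "lower W R (keyC W R p) p x = p x" using step.prems by (simp add: lower_def)
    then show ?thesis using step.IH[OF px step.prems(2)] by (metis reach.step)
  qed
qed

lemma reach_glue:
  assumes "reach q C x" "x \<in> W - R" "q \<in> (W - R) \<rightarrow> (W - R)" "g \<in> C \<rightarrow> R"
  shows "reach (glue R C g q) R x"
  using assms
proof (induction rule: reach.induct)
  case (base x)
  then have "glue R C g q x \<in> R" by (auto simp: glue_def)
  then show ?case by (blast intro: reach.base reach.step)
next
  case (step x)
  show ?case
  proof (cases "x \<in> C")
    case True
    then have "glue R C g q x \<in> R" using step.prems by (auto simp: glue_def)
    then show ?thesis by (blast intro: reach.base reach.step)
  next
    case False
    then have e: "glue R C g q x = q x" using step.prems by (auto simp: glue_def)
    have "q x \<in> W - R" using step.prems by auto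
    then show ?thesis using step.IH step.prems e by (metis reach.step)
  qed
qed

lemma ch_root:
  assumes "p \<in> W \<rightarrow>\<^sub>E W" "\<forall>r\<in>R. p r = r" "r \<in> R" "R \<subseteq> W"
  shows "ch W p r = restrict p (keyC W R p) -` {r} \<inter> keyC W R p"
  using assms by (auto simp: ch_def keyC_def)

lemma ch_lower:
  assumes "p \<in> W \<rightarrow>\<^sub>E W" "\<forall>r\<in>R. p r = r" "x \<in> W - R"
  shows "ch (W - R) (lower W R (keyC W R p) p) x = ch W p x"
  using assms by (auto simp: ch_def keyC_def lower_def)

lemma slice_card:
  assumes W: "finite W" "R \<subseteq> W" and C: "C \<subseteq> W - R"
  shows "card {p \<in> hset P W R. keyC W R p = C} = card (fset P C R) * card (hset P (W - R) C)"
proof -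
  let ?A = "{p \<in> hset P W R. keyC W R p = C}"
  let ?F = "\<lambda>p. (restrict p C, lower W R C p)"
  let ?B = "\<lambda>(g, q). glue R C g q"
  have F_in: "?F p \<in> fset P C R \<times> hset P (W - R) C" if p: "p \<in> ?A" for p
  proof -
    have gp: "good P W R p" and kc: "keyC W R p = C" using p by (auto simp: hset_def)
    have pW: "p \<in> W \<rightarrow>\<^sub>E W" and fx: "\<forall>r\<in>R. p r = r" and re: "\<forall>x\<in>W. reach p R x"
      and chP: "\<forall>x\<in>W. card (ch W p x) \<in> P" using gp by (auto simp: good_def)
    have "restrict p C \<in> C \<rightarrow>\<^sub>E R" using kc by (auto simp: keyC_def)
    moreover have "\<forall>r\<in>R. card (restrict p C -` {r} \<inter> C) \<in> P"
    proof
      fix r assume r: "r \<in> R"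
      have "ch W p r = restrict p C -` {r} \<inter> C" using ch_root[OF pW fx r W(2)] kc by simp
      then show "card (restrict p C -` {r} \<inter> C) \<in> P" using chP W(2) r by (metis subsetD)
    qed
    ultimately have "restrict p C \<in> fset P C R" by (simp add: fset_def)
    moreover have "good P (W - R) C (lower W R C p)"
    proof -
      have "lower W R C p \<in> (W - R) \<rightarrow>\<^sub>E (W - R)"
        using pW kc by (auto simp: lower_def keyC_def PiE_def Pi_def extensional_def)
      moreover have "\<forall>c\<in>C. lower W R C p c = c" using C by (auto simp: lower_def)
      moreover have "\<forall>x\<in>W - R. reach (lower W R C p) C x"
        using reach_lower[of p R _ W] re pW kc by (auto simp: PiE_def)
      moreover have "\<forall>x\<in>W - R. card (ch (W - R) (lower W R C p) x) \<in> P"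
        using ch_lower[OF pW fx] chP kc by auto
      ultimately show ?thesis by (simp add: good_def)
    qed
    ultimately show ?thesis by (simp add: hset_def)
  qed
  have B_props: "?B gq \<in> ?A \<and> ?F (?B gq) = gq" if gq: "gq \<in> fset P C R \<times> hset P (W - R) C" for gq
  proof -
    obtain g q where gq_eq: "gq = (g, q)" by (cases gq)
    have g: "g \<in> C \<rightarrow>\<^sub>E R" and gfib: "\<forall>r\<in>R. card (g -` {r} \<inter> C) \<in> P"
      using gq gq_eq by (auto simp: fset_def)
    have gqq: "good P (W - R) C q" using gq gq_eq by (auto simp: hset_def)
    have qW: "q \<in> (W - R) \<rightarrow>\<^sub>E (W - R)" and qfix: "\<forall>c\<in>C. q c = c" and qre: "\<forall>x\<in>W - R. reach q C x"
      and qch: "\<forall>x\<in>W - R. card (ch (W - R) q x) \<in> P" using gqq by (auto simp: good_def)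
    define p where "p = glue R C g q"
    have pW: "p \<in> W \<rightarrow>\<^sub>E W"
      using g qW W(2) C unfolding p_def glue_def by (auto simp: PiE_def Pi_def extensional_def)
    have fx: "\<forall>r\<in>R. p r = r" by (simp add: p_def glue_def)
    have kc: "keyC W R p = C"
      using g qW C unfolding p_def glue_def keyC_def by (auto simp: PiE_def Pi_def)
    have res: "restrict p C = g"
    proof
      fix x show "restrict p C x = g x"
        using g C by (auto simp: p_def glue_def PiE_def extensional_def)
    qed
    have low: "lower W R C p = q"
    proof
      fix x show "lower W R C p x = q x"
        using qW qfix by (auto simp: p_def glue_def lower_def PiE_def extensional_def)
    qed
    have re: "\<forall>x\<in>W. reach p R x"
    proof
      fix x assume x: "x \<in> W"
      show "reach p R x"
      proof (cases "x \<in> R")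
        case True then show ?thesis by (rule reach.base)
      next
        case False
        then show ?thesis using reach_glue[of q C x W R g] qre x qW g
          by (auto simp: p_def PiE_def)
      qed
    qed
    have chP: "\<forall>x\<in>W. card (ch W p x) \<in> P"
    proof
      fix x assume x: "x \<in> W"
      show "card (ch W p x) \<in> P"
      proof (cases "x \<in> R")
        case True
        have "ch W p x = g -` {x} \<inter> C"
          using ch_root[OF pW fx True W(2)] kc res by auto
        then show ?thesis using gfib True by simp
      next
        case False
        then have "ch W p x = ch (W - R) q x" using ch_lower[OF pW fx, of x] kc low x by simp
        then show ?thesis using qch x False by simp
      qed
    qed
    have "p \<in> ?A" using pW fx re chP kc by (simp add: hset_def good_def)
    moreover have "?F p = gq" using res low gq_eq by simp
    ultimately show ?thesis using gq_eq p_def by simp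
  qed
  have "bij_betw ?F ?A (fset P C R \<times> hset P (W - R) C)"
  proof (rule bij_betw_byWitness[where f'="?B"])
    show "\<forall>a\<in>?A. ?B (?F a) = a"
    proof
      fix p assume p: "p \<in> ?A"
      have pW: "p \<in> W \<rightarrow>\<^sub>E W" and fx: "\<forall>r\<in>R. p r = r"
        using p by (auto simp: hset_def good_def)
      show "?B (?F p) = p"
      proof
        fix x show "?B (?F p) x = p x"
          using pW fx C W(2) by (auto simp: glue_def lower_def PiE_def extensional_def)
      qed
    qed
    show "\<forall>a'\<in>fset P C R \<times> hset P (W - R) C. ?F (?B a') = a'" using B_props by blast
    show "?F ` ?A \<subseteq> fset P C R \<times> hset P (W - R) C" using F_in by blast
    show "?B ` (fset P C R \<times> hset P (W - R) C) \<subseteq> ?A" using B_props by blast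
  qed
  then have "card ?A = card (fset P C R \<times> hset P (W - R) C)" by (rule bij_betw_same_card)
  then show ?thesis by (simp add: card_cartesian_product)
qed

lemma hset_decomp:
  assumes "finite W" "R \<subseteq> W"
  shows "card (hset P W R) = (\<Sum>C\<in>Pow (W - R). card (fset P C R) * card (hset P (W - R) C))"
proof -
  have "card (hset P W R) = (\<Sum>C\<in>Pow (W - R). card {p \<in> hset P W R. keyC W R p = C})"
    by (rule card_group) (use assms in \<open>auto simp: finite_hset keyC_def\<close>)
  also have "\<dots> = (\<Sum>C\<in>Pow (W - R). card (fset P C R) * card (hset P (W - R) C))"
    by (rule sum.cong) (use assms slice_card in auto)
  finally show ?thesis .
qed



lemma hset_empty_roots: "finite W \<Longrightarrow> card (hset P W {}) = (if W = {} then 1 else 0)"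
proof (cases "W = {}")
  case True
  have "hset P W {} = {\<lambda>_. undefined}" using True by (auto simp: hset_def good_def ch_def)
  then show ?thesis using True by simp
next
  case False
  then obtain x where "x \<in> W" by blast
  then have "hset P W {} = {}" using reach_empty by (auto simp: hset_def good_def)
  then show ?thesis using False by simp
qed

lemma G_power_coeff:
  fixes \<phi> G :: "'a::field_char_0 fps"
  assumes "G = \<phi> oo (fps_X * G)"
  shows "(G ^ k) $ d = (\<Sum>j=0..d. (\<phi> ^ k) $ j * (G ^ j) $ (d - j))"
proof -
  have "G ^ k = \<phi> ^ k oo (fps_X * G)"
    using assms fps_compose_power[of "fps_X * G" \<phi> k] by simp
  then have "(G ^ k) $ d = (\<Sum>j=0..d. (\<phi> ^ k) $ j * ((fps_X * G) ^ j) $ d)"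
    by (simp add: fps_compose_nth)
  also have "\<dots> = (\<Sum>j=0..d. (\<phi> ^ k) $ j * (G ^ j) $ (d - j))"
    by (rule sum.cong) (auto simp: power_mult_distrib fps_X_power_mult_nth)
  finally show ?thesis .
qed

lemma hcount:
  fixes G :: "'a::field_char_0 fps"
  assumes G: "G = e_P P oo (fps_X * G)"
  assumes "finite W" "R \<subseteq> W"
  shows "(of_nat (card (hset P W R)) :: 'a) = fact (card W - card R) * (G ^ card R) $ (card W - card R)"
  using assms(2,3)
proof (induction "card W" arbitrary: W R rule: less_induct)
  case less
  let ?\<phi> = "e_P P :: 'a fps"
  show ?case
  proof (cases "R = {}")
    case True
    then show ?thesis using less.prems by (simp add: hset_empty_roots)
  next
    case False
    let ?k = "card R" and ?d = "card (W - R)"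
    have fR: "finite R" using less.prems finite_subset by blast
    have d: "?d = card W - card R" using less.prems fR by (simp add: card_Diff_subset)
    have R0: "card R > 0" using False fR by (simp add: card_gt_0_iff)
    have RW: "card R \<le> card W" using less.prems by (simp add: card_mono)
    have lt: "card (W - R) < card W" using d R0 RW by linarith
    have "(of_nat (card (hset P W R)) :: 'a) =
        (\<Sum>C\<in>Pow (W - R). of_nat (card (fset P C R)) * of_nat (card (hset P (W - R) C)))"
      using hset_decomp[OF less.prems] by simp
    also have "\<dots> = (\<Sum>C\<in>Pow (W - R). (fact (card C) * (?\<phi> ^ ?k) $ card C) *
                      (fact (?d - card C) * (G ^ card C) $ (?d - card C)))"
    proof (rule sum.cong[OF refl])
      fix C assume "C \<in> Pow (W - R)"
      then have C: "C \<subseteq> W - R" by simp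
      have fC: "finite C" using C less.prems finite_subset by blast
      show "(of_nat (card (fset P C R)) :: 'a) * of_nat (card (hset P (W - R) C)) =
          (fact (card C) * (?\<phi> ^ ?k) $ card C) * (fact (?d - card C) * (G ^ card C) $ (?d - card C))"
        using fcount[OF fR fC, where 'a='a, of P] less.hyps[OF lt _ C] less.prems by simp
    qed
    also have "\<dots> = (\<Sum>j=0..?d. of_nat (?d choose j) * ((fact j * (?\<phi> ^ ?k) $ j) *
                      (fact (?d - j) * (G ^ j) $ (?d - j))))"
      by (rule sum_pow_card[where f = "\<lambda>j. (fact j * (?\<phi> ^ ?k) $ j) * (fact (?d - j) * (G ^ j) $ (?d - j))"])
         (use less.prems in simp)
    also have "\<dots> = (\<Sum>j=0..?d. fact ?d * ((?\<phi> ^ ?k) $ j * (G ^ j) $ (?d - j)))"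
    proof (rule sum.cong[OF refl])
      fix j assume "j \<in> {0..?d}"
      then have j: "j \<le> ?d" by simp
      have "(of_nat (fact j * fact (?d - j) * (?d choose j)) :: 'a) = of_nat (fact ?d)"
        using binomial_fact_lemma[OF j] by simp
      then have "fact j * fact (?d - j) * (of_nat (?d choose j) :: 'a) = fact ?d"
        by (simp only: of_nat_mult of_nat_fact)
      note fj = this
      have "of_nat (?d choose j) * ((fact j * (?\<phi> ^ ?k) $ j) * (fact (?d - j) * (G ^ j) $ (?d - j))) =
          (fact j * fact (?d - j) * (of_nat (?d choose j) :: 'a)) * ((?\<phi> ^ ?k) $ j * (G ^ j) $ (?d - j))"
        by (simp only: ac_simps)
      then show "of_nat (?d choose j) * ((fact j * (?\<phi> ^ ?k) $ j) * (fact (?d - j) * (G ^ j) $ (?d - j))) =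
          fact ?d * ((?\<phi> ^ ?k) $ j * (G ^ j) $ (?d - j))"
        by (simp only: fj)
    qed
    also have "\<dots> = fact ?d * (G ^ ?k) $ ?d"
      using G_power_coeff[OF G, of ?k ?d] by (simp add: sum_distrib_left)
    finally show ?thesis using d by simp
  qed
qed

lemma P_trees_eq: "P_trees P n = (\<Union>r\<in>{1..n}. hset P {1..n} {r})"
proof -
  have "p \<in> P_trees P n \<longleftrightarrow> (\<exists>r\<in>{1..n}. good P {1..n} {r} p)" for p
    unfolding P_trees_def rooted_tree_def good_def children_def ch_def
    by (auto simp: reach_iff)
  then show ?thesis by (auto simp: hset_def)
qed

lemma card_P_trees: "card (P_trees P n) = (\<Sum>r\<in>{1..n}. card (hset P {1..n} {r}))"
proof -
  have "card (\<Union>r\<in>{1..n}. hset P {1..n} {r}) = (\<Sum>r\<in>{1..n}. card (hset P {1..n} {r}))"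
  proof (rule card_UN_disjoint)
    show "\<forall>i\<in>{1..n}. \<forall>j\<in>{1..n}. i \<noteq> j \<longrightarrow> hset P {1..n} {i} \<inter> hset P {1..n} {j} = {}"
    proof (intro ballI impI)
      fix i j assume i: "i \<in> {1..n}" and j: "j \<in> {1..n}" and ij: "i \<noteq> j"
      show "hset P {1..n} {i} \<inter> hset P {1..n} {j} = {}"
      proof (rule ccontr)
        assume "hset P {1..n} {i} \<inter> hset P {1..n} {j} \<noteq> {}"
        then obtain p where "good P {1..n} {i} p" "good P {1..n} {j} p" by (auto simp: hset_def)
        then have "reach p {i} j" "p j = j" using j by (auto simp: good_def)
        then have "j \<in> {i}" by (rule reach_fixed)
        then show False using ij by simp
      qed
    qed
  qed (auto simp: finite_hset)
  then show ?thesis by (simp add: P_trees_eq)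
qed

lemma T_P_eq:
  fixes G :: "'a::field_char_0 fps"
  assumes G: "G = e_P P oo (fps_X * G)"
  shows "T_P P = fps_X * G"
proof (rule fps_ext)
  fix n
  show "T_P P $ n = (fps_X * G) $ n"
  proof (cases n)
    case 0
    have "P_trees P 0 = {}" by (simp add: P_trees_eq)
    then show ?thesis using 0 by (simp add: T_P_def)
  next
    case (Suc m)
    have "(of_nat (card (P_trees P n)) :: 'a) = (\<Sum>r\<in>{1..n}. of_nat (card (hset P {1..n} {r})))"
      by (simp add: card_P_trees)
    also have "\<dots> = (\<Sum>r\<in>{1..n}. fact m * G $ m)"
      by (rule sum.cong[OF refl]) (use hcount[OF G, of "{1..n}" "{_}"] Suc in simp)
    also have "\<dots> = fact n * G $ m" using Suc by (simp add: algebra_simps)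
    finally have c: "(of_nat (card (P_trees P n)) :: 'a) = fact n * G $ m" .
    have "T_P P $ n = (of_nat (card (P_trees P n)) :: 'a) / fact n" by (simp add: T_P_def)
    also have "\<dots> = G $ m" unfolding c by simp
    finally show ?thesis using Suc by simp
  qed
qed

lemma F_P_coeff: "(F_P P :: 'a::field_char_0 fps) $ n = ((e_P P :: 'a fps) ^ n) $ n"
proof -
  have "P_functions P n = fset P {1..n} {1..n}" by (simp add: P_functions_def fset_def)
  then have "(of_nat (card (P_functions P n)) :: 'a) = fact n * ((e_P P :: 'a fps) ^ n) $ n"
    using fcount[of "{1..n}" "{1..n}" P] by simp
  then show ?thesis by (simp add: F_P_def)
qed

theorem corollary5p6:
  fixes P :: "nat set"
  assumes "0 \<in> P"
  shows "(F_P P :: 'a::field_char_0 fps) = fps_X * fps_deriv (T_P P) / T_P P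
     \<and> (\<forall>n. fps_nth (F_P P :: 'a fps) n = fps_nth ((e_P P :: 'a fps) ^ n) n)"
proof -
  let ?\<phi> = "e_P P :: 'a fps"
  have \<phi>0: "?\<phi> $ 0 = 1" using assms by (simp add: e_P_def)
  define T where "T = fps_inv (fps_X * inverse ?\<phi>)"
  have T1: "T = fps_X * (?\<phi> oo T)" using lagrange(1)[OF \<phi>0 T_def] .
  define G where "G = ?\<phi> oo T"
  have TG: "T = fps_X * G" using T1 by (simp add: G_def)
  have G: "G = ?\<phi> oo (fps_X * G)" using TG by (simp add: G_def flip: TG)
  have TP: "T_P P = T" using T_P_eq[OF G] TG by simp
  have coeff: "\<forall>n. (F_P P :: 'a fps) $ n = (?\<phi> ^ n) $ n" by (simp add: F_P_coeff)
  have eq: "(F_P P :: 'a fps) $ n = (fps_X * fps_deriv (T_P P) / T_P P) $ n" for n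
    using lagrange(2)[OF \<phi>0 T_def, of n] coeff TP by simp
  have "(F_P P :: 'a fps) = fps_X * fps_deriv (T_P P) / T_P P" by (rule fps_ext) (rule eq)
  then show ?thesis using coeff by simp
qed

end
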